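(* Let $k\ge2$, $\sigma_i=\frac{i(k-i)}2$ for $i=0,\dots,k$, and let $M=(m_{i,j})_{1\le i,j\le k}$ be the symmetric tridiagonal matrix with $m_{i,i-1}=\sigma_{i-1}$, $m_{i,i}=-(\sigma_{i-1}+\sigma_i)$, $m_{i,i+1}=\sigma_i$ and $m_{i,j}=0$ if $|i-j|\ge2$. Then $M$ is diagonalizable with real eigenvalues $-m_i=-\frac{i(i-1)}2$, $i=1,\dots,k$, and an eigenvector for the eigenvalue $-m_1=0$ is $(1,\dots,1)^t$. *)

theory Defs
  imports "Jordan_Normal_Form.Matrix" "Jordan_Normal_Form.Char_Poly"
begin

definition sigma :: "nat \<Rightarrow> nat \<Rightarrow> real" where
  "sigma k i = real i * (real k - real i) / 2"

text \<open>Entries m_{i,j} of the paper, with 1-based indices 1 <= i,j <= k.\<close>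
definition m_entry :: "nat \<Rightarrow> nat \<Rightarrow> nat \<Rightarrow> real" where
  "m_entry k i j =
     (if j + 1 = i then sigma k (i - 1)
      else if i = j then - (sigma k (i - 1) + sigma k i)
      else if j = i + 1 then sigma k i
      else 0)"

text \<open>The k x k matrix M; JNF matrices are 0-indexed, so entry (a,b) is m_{a+1,b+1}.\<close>
definition Mmat :: "nat \<Rightarrow> real mat" where
  "Mmat k = mat k k (\<lambda>(a, b). m_entry k (a + 1) (b + 1))"

definition mval :: "nat \<Rightarrow> real" where
  "mval i = real i * (real i - 1) / 2"

end

theory Submission
  imports Defs
begin

lemma alg:
  fixes A K E x y z w v :: real
  assumes h0: "A \<noteq> 0 \<Longrightarrow> y = z + w" and hA: "A = 0 \<Longrightarrow> y = 0 \<and> w = 0"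
    and h2: "v = x + y" and h1: "A * z = y * (E+1)" and h4: "(A+1)*x = v*(E+1)"
  shows "A*(K-A)/2 * (w - y) + (A+1)*(K-(A+1))/2*(v - y) = - ((E+1)+1)*((E+1)+1-1)/2 * y + (E+1)*(K-(E+1))/2 * x"
proof -
  have t0: "A*(K-A)/2 * (w - y) = - (K-A)*(E+1)*y/2"
  proof (cases "A = 0")
    case True then show ?thesis using hA by simp
  next
    case False
    then have "w - y = - z" using h0 by simp
    then have "A*(K-A)/2 * (w - y) = A*(K-A)/2 * (- z)" by (simp only:)
    also have "\<dots> = - (K-A)*(A*z)/2" by (simp add: algebra_simps)
    finally have "A*(K-A)/2 * (w - y) = - (K-A)*(A*z)/2" .
    then show ?thesis using h1 by (simp add: algebra_simps)
  qed
  have h3: "A * x = (E+1) * y + E * x" using h4 h2 by (simp add: algebra_simps)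
  have t1: "(A+1)*(K-(A+1))/2*(v - y) = (K - A - 1) * ((A+1)*x)/2" using h2 by (simp add: algebra_simps)
  also have "\<dots> = (K - A - 1) * ((E+1)*(x+y))/2" using h4 h2 by simp
  also have "\<dots> = ((K - 1) * ((E+1)*(x+y)) - (E+1) * (A * x) - (E+1)*(A*y))/2" by (simp add: algebra_simps)
  also have "\<dots> = ((K - 1) * ((E+1)*(x+y)) - (E+1) * ((E+1) * y + E * x) - (E+1)*(A*y))/2" using h3 by simp
  finally have t1': "(A+1)*(K-(A+1))/2*(v - y) = ((K - 1) * ((E+1)*(x+y)) - (E+1) * ((E+1) * y + E * x) - (E+1)*(A*y))/2" .
  show ?thesis unfolding t0 t1' by (simp add: field_simps)
qed

lemma binid:
  fixes a d k :: nat
  shows "sigma k a * (real ((a-1) choose d) - real (a choose d)) + sigma k (a+1) * (real ((a+1) choose d) - real (a choose d))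
    = - mval (d+1) * real (a choose d) + (if d > 0 then real d * (real k - real d) / 2 * real (a choose (d-1)) else 0)"
proof (cases d)
  case 0 then show ?thesis by (simp add: mval_def)
next
  case (Suc e)
  have n0: "a \<noteq> 0 \<Longrightarrow> a choose Suc e = ((a-1) choose e) + ((a-1) choose Suc e)"
    by (metis Suc_pred' binomial_Suc_Suc gr0I)
  have h0: "real a \<noteq> 0 \<Longrightarrow> real (a choose Suc e) = real ((a-1) choose e) + real ((a-1) choose Suc e)"
    using n0 by simp
  have hA: "real a = 0 \<Longrightarrow> real (a choose Suc e) = 0 \<and> real ((a-1) choose Suc e) = 0" by simp
  have h2: "real ((a+1) choose Suc e) = real (a choose e) + real (a choose Suc e)" by simp
  have n1: "a * ((a-1) choose e) = (a choose Suc e) * Suc e"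
  proof (cases a)
    case 0 then show ?thesis by simp
  next
    case (Suc a') then show ?thesis using Suc_times_binomial_eq[of a' e] by simp
  qed
  have h1: "real a * real ((a-1) choose e) = real (a choose Suc e) * (real e + 1)"
    using arg_cong[OF n1, of real] by (simp add: algebra_simps)
  have n4: "Suc a * (a choose e) = (Suc a choose Suc e) * Suc e" by (rule Suc_times_binomial_eq)
  have h4: "(real a + 1) * real (a choose e) = real ((a+1) choose Suc e) * (real e + 1)"
    using arg_cong[OF n4, of real] by (simp add: algebra_simps)
  have "real a*(real k-real a)/2 * (real ((a-1) choose Suc e) - real (a choose Suc e)) + (real a+1)*(real k-(real a+1))/2*(real ((a+1) choose Suc e) - real (a choose Suc e)) = - ((real e+1)+1)*((real e+1)+1-1)/2 * real (a choose Suc e) + (real e+1)*(real k-(real e+1))/2 * real (a choose e)"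
    by (rule alg[OF h0 hA h2 h1 h4])
  then show ?thesis unfolding Suc sigma_def mval_def by (simp add: field_simps)
qed

lemma mrow:
  assumes "a < k"
  shows "(\<Sum>b\<in>{0..<k}. m_entry k (a+1) (b+1) * f b) =
    sigma k a * (f (a-1) - f a) + sigma k (a+1) * (f (a+1) - f a)"
proof -
  have e: "\<And>b. m_entry k (a+1) (b+1) * f b =
     (if b = a - 1 \<and> 0 < a then sigma k a * f b else 0) +
     (if b = a then - (sigma k a + sigma k (a+1)) * f b else 0) +
     (if b = a + 1 then sigma k (a+1) * f b else 0)"
    unfolding m_entry_def by auto
  have s0: "sigma k 0 = 0" and sk: "sigma k k = 0" by (auto simp: sigma_def)
  show ?thesis unfolding e sum.distrib
    apply (simp add: sum.delta' assms)
    using assms s0 sk by (cases "a = 0"; cases "a + 1 = k"; auto simp: algebra_simps)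
qed


definition Lm :: "nat \<Rightarrow> real mat" where
  "Lm k = mat k k (\<lambda>(a, d). real (a choose d))"

definition Tm :: "nat \<Rightarrow> real mat" where
  "Tm k = mat k k (\<lambda>(e, d). if e = d then - mval (d+1) else if e + 1 = d then real d * (real k - real d) / 2 else 0)"

fun gU :: "nat \<Rightarrow> nat \<Rightarrow> nat \<Rightarrow> real" where
  "gU k e 0 = 1"
| "gU k e (Suc n) = (- (real (e - Suc n + 1) * (real k - real (e - Suc n) - 1)) / (real (e - (e - Suc n)) * real (e + (e - Suc n) + 1))) * gU k e n"

definition Um :: "nat \<Rightarrow> real mat" where
  "Um k = mat k k (\<lambda>(d, e). if d \<le> e then gU k e (e - d) else 0)"

definition Dm :: "nat \<Rightarrow> real mat" where
  "Dm k = mat_diag k (\<lambda>a. - mval (a + 1))"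

lemma carr[simp]: "Mmat k \<in> carrier_mat k k" "Lm k \<in> carrier_mat k k" "Tm k \<in> carrier_mat k k"
  "Um k \<in> carrier_mat k k" "Dm k \<in> carrier_mat k k"
  by (auto simp: Mmat_def Lm_def Tm_def Um_def Dm_def)

lemma entry_mult:
  assumes "A \<in> carrier_mat k k" "B \<in> carrier_mat k k" "i < k" "j < k"
  shows "(A * B) $$ (i, j) = (\<Sum>b\<in>{0..<k}. A $$ (i, b) * B $$ (b, j))"
  using assms by (auto simp: scalar_prod_def intro!: sum.cong)

lemma tcol:
  assumes "j < k"
  shows "(\<Sum>e\<in>{0..<k}. g e * Tm k $$ (e, j)) = g j * (- mval (j+1)) + (if j > 0 then g (j-1) * (real j * (real k - real j) / 2) else 0)"
proof -
  have "(\<Sum>e\<in>{0..<k}. g e * Tm k $$ (e, j)) = (\<Sum>e\<in>{0..<k}. (if e = j then g j * (- mval (j+1)) else 0) + (if e = j - 1 \<and> 0 < j then g (j-1) * (real j * (real k - real j) / 2) else 0))"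
    using assms by (intro sum.cong) (auto simp: Tm_def)
  also have "\<dots> = g j * (- mval (j+1)) + (if j > 0 then g (j-1) * (real j * (real k - real j) / 2) else 0)"
    using assms by (simp add: sum.distrib sum.delta')
  finally show ?thesis .
qed

lemma trow:
  assumes "d < k"
  shows "(\<Sum>c\<in>{0..<k}. Tm k $$ (d, c) * h c) = - mval (d+1) * h d + real (d+1) * (real k - real (d+1)) / 2 * h (d+1)"
proof -
  have "(\<Sum>c\<in>{0..<k}. Tm k $$ (d, c) * h c) = (\<Sum>c\<in>{0..<k}. (if c = d then - mval (d+1) * h d else 0) + (if c = d + 1 then real (d+1) * (real k - real (d+1)) / 2 * h (d+1) else 0))"
    using assms by (intro sum.cong) (auto simp: Tm_def)
  also have "\<dots> = - mval (d+1) * h d + real (d+1) * (real k - real (d+1)) / 2 * h (d+1)"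
    using assms by (cases "d + 1 = k") (auto simp: sum.distrib sum.delta')
  finally show ?thesis .
qed

lemma MLeq: "Mmat k * Lm k = Lm k * Tm k"
proof (rule eq_matI)
  fix i j assume ij: "i < dim_row (Lm k * Tm k)" "j < dim_col (Lm k * Tm k)"
  then have i: "i < k" and j: "j < k" by (auto simp: Lm_def Tm_def)
  have "(Mmat k * Lm k) $$ (i, j) = (\<Sum>b\<in>{0..<k}. m_entry k (i+1) (b+1) * real (b choose j))"
    unfolding entry_mult[OF carr(1) carr(2) i j] using i j by (intro sum.cong) (auto simp: Mmat_def Lm_def)
  also have "\<dots> = - mval (j+1) * real (i choose j) + (if j > 0 then real j * (real k - real j) / 2 * real (i choose (j-1)) else 0)"
    unfolding mrow[OF i] binid ..
  also have "\<dots> = (\<Sum>e\<in>{0..<k}. Lm k $$ (i, e) * Tm k $$ (e, j))"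
  proof -
    have "(\<Sum>e\<in>{0..<k}. Lm k $$ (i, e) * Tm k $$ (e, j)) = (\<Sum>e\<in>{0..<k}. real (i choose e) * Tm k $$ (e, j))"
      using i by (intro sum.cong) (auto simp: Lm_def)
    also have "\<dots> = - mval (j+1) * real (i choose j) + (if j > 0 then real j * (real k - real j) / 2 * real (i choose (j-1)) else 0)"
      unfolding tcol[OF j] by simp
    finally show ?thesis by simp
  qed
  also have "\<dots> = (Lm k * Tm k) $$ (i, j)" unfolding entry_mult[OF carr(2) carr(3) i j] ..
  finally show "(Mmat k * Lm k) $$ (i, j) = (Lm k * Tm k) $$ (i, j)" .
qed (auto simp: Mmat_def Lm_def Tm_def)

definition uf :: "nat \<Rightarrow> nat \<Rightarrow> nat \<Rightarrow> real" where
  "uf k e c = (if c \<le> e then gU k e (e - c) else 0)"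

lemma aux: "(P::real) \<noteq> 0 \<Longrightarrow> - N / P * (P / 2) = - N / 2"
  by (simp add: field_simps)

lemma ukey:
  "- mval (d+1) * uf k e d + real (d+1) * (real k - real (d+1)) / 2 * uf k e (d+1) = uf k e d * (- mval (e+1))"
proof (cases "d < e")
  case True
  define n where "n = e - (d+1)"
  have en: "e - d = Suc n" and dn: "e - Suc n = d" using True by (auto simp: n_def)
  define G where "G = gU k e n"
  define co where "co = - (real (d + 1) * (real k - real d - 1)) / (real (e - d) * real (e + d + 1))"
  have u0: "uf k e d = co * G" unfolding uf_def co_def G_def using True en dn by simp
  have u1: "uf k e (d+1) = G" unfolding uf_def G_def n_def using True by simp
  have ne: "real (e - d) * real (e + d + 1) \<noteq> 0" using True by simp
  have red: "real (e - d) = real e - real d" using True by simp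
  have H: "co * (mval (e+1) - mval (d+1)) = - real (d+1) * (real k - real (d+1)) / 2"
  proof -
    have hm: "mval (e+1) - mval (d+1) = real (e - d) * real (e + d + 1) / 2"
      unfolding mval_def red by (simp add: field_simps)
    have "co * (mval (e+1) - mval (d+1)) = co * (real (e - d) * real (e + d + 1) / 2)"
      by (simp only: hm)
    also have "\<dots> = - (real (d + 1) * (real k - real d - 1)) / 2"
      unfolding co_def by (rule aux[OF ne])
    finally show ?thesis by (simp add: algebra_simps)
  qed
  have "- mval (d+1) * (co * G) + real (d+1) * (real k - real (d+1)) / 2 * G - co * G * (- mval (e+1))
     = G * (co * (mval (e+1) - mval (d+1)) + real (d+1) * (real k - real (d+1)) / 2)"
    by (simp add: algebra_simps)
  also have "\<dots> = 0" unfolding H by (simp add: field_simps)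
  finally show ?thesis unfolding u0 u1 by simp
next
  case False
  then show ?thesis by (cases "d = e") (auto simp: uf_def)
qed

lemma TU: "Tm k * Um k = Um k * Dm k"
proof (rule eq_matI)
  fix i j assume ij: "i < dim_row (Um k * Dm k)" "j < dim_col (Um k * Dm k)"
  then have i: "i < k" and j: "j < k" by (auto simp: Um_def Dm_def mat_diag_def)
  have "(Tm k * Um k) $$ (i, j) = (\<Sum>c\<in>{0..<k}. Tm k $$ (i, c) * uf k j c)"
    unfolding entry_mult[OF carr(3) carr(4) i j] using i j by (intro sum.cong) (auto simp: Um_def uf_def)
  also have "\<dots> = uf k j i * (- mval (j+1))" unfolding trow[OF i] ukey ..
  also have "\<dots> = (Um k * Dm k) $$ (i, j)"
    unfolding Dm_def mat_diag_mult_right[OF carr(4)] using i j by (simp add: Um_def uf_def)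
  finally show "(Tm k * Um k) $$ (i, j) = (Um k * Dm k) $$ (i, j)" .
qed (auto simp: Um_def Dm_def Tm_def mat_diag_def)

lemma detL: "det (Lm k) = 1"
proof -
  have "det (Lm k) = prod_list (diag_mat (Lm k))"
    by (rule det_lower_triangular[OF _ carr(2)]) (auto simp: Lm_def)
  also have "\<dots> = 1" unfolding prod_list_diag_prod by (simp add: Lm_def)
  finally show ?thesis .
qed

lemma detU: "det (Um k) = 1"
proof -
  have "det (Um k) = prod_list (diag_mat (Um k))"
    by (rule det_upper_triangular[OF _ carr(4)]) (auto simp: Um_def upper_triangular_def)
  also have "\<dots> = 1" unfolding prod_list_diag_prod by (simp add: Um_def)
  finally show ?thesis .
qed

theorem lemma2p5:
  fixes k :: nat
  assumes "k \<ge> 2"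
  shows "similar_mat (Mmat k) (mat_diag k (\<lambda>a. - mval (a + 1)))
         \<and> eigenvector (Mmat k) (vec k (\<lambda>_. 1)) (- mval 1)
         \<and> mval 1 = 0"
proof (intro conjI)
  show m1: "mval 1 = 0" by (simp add: mval_def)
  define P where "P = Lm k * Um k"
  have Pc: "P \<in> carrier_mat k k" unfolding P_def by (rule mult_carrier_mat[OF carr(2) carr(4)])
  have MP: "Mmat k * P = P * Dm k"
  proof -
    have "Mmat k * P = (Mmat k * Lm k) * Um k" unfolding P_def
      by (rule assoc_mult_mat[symmetric, of _ k k _ k _ k]) auto
    also have "\<dots> = (Lm k * Tm k) * Um k" unfolding MLeq ..
    also have "\<dots> = Lm k * (Tm k * Um k)" by (rule assoc_mult_mat[of _ k k _ k _ k]) auto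
    also have "\<dots> = Lm k * (Um k * Dm k)" unfolding TU ..
    also have "\<dots> = P * Dm k" unfolding P_def by (rule assoc_mult_mat[symmetric, of _ k k _ k _ k]) auto
    finally show ?thesis .
  qed
  have dP: "det P = 1" unfolding P_def det_mult[OF carr(2) carr(4)] detL detU by simp
  have "P \<in> Units (ring_mat TYPE(real) k ())"
    by (rule det_non_zero_imp_unit[OF Pc]) (simp add: dP)
  then obtain Q where Qc: "Q \<in> carrier_mat k k" and QP: "Q * P = 1\<^sub>m k" and PQ: "P * Q = 1\<^sub>m k"
    unfolding Units_def ring_mat_def by auto
  have "Mmat k = Mmat k * (P * Q)" unfolding PQ by (rule right_mult_one_mat[OF carr(1), symmetric])
  also have "\<dots> = (Mmat k * P) * Q" by (rule assoc_mult_mat[symmetric, of _ k k _ k _ k]) (auto simp: Pc Qc)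
  also have "\<dots> = P * Dm k * Q" unfolding MP ..
  finally have Meq: "Mmat k = P * Dm k * Q" .
  show "similar_mat (Mmat k) (mat_diag k (\<lambda>a. - mval (a + 1)))"
    unfolding similar_mat_def similar_mat_wit_def Let_def
    apply (rule exI[of _ P], rule exI[of _ Q])
    using Pc Qc PQ QP Meq carr(1) carr(5) by (auto simp: Dm_def Mmat_def)
  show "eigenvector (Mmat k) (vec k (\<lambda>_. 1)) (- mval 1)"
    unfolding eigenvector_def
  proof (intro conjI)
    show "vec k (\<lambda>_. 1) \<in> carrier_vec (dim_row (Mmat k))" by (simp add: Mmat_def)
    have dr: "dim_row (Mmat k) = k" by (simp add: Mmat_def)
    show "vec k (\<lambda>_. 1::real) \<noteq> 0\<^sub>v (dim_row (Mmat k))"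
    proof
      assume "vec k (\<lambda>_. 1::real) = 0\<^sub>v (dim_row (Mmat k))"
      then have "vec k (\<lambda>_. 1::real) $ 0 = (0\<^sub>v k :: real vec) $ 0" unfolding dr by (rule arg_cong)
      then show False using assms by simp
    qed
    show "Mmat k *\<^sub>v vec k (\<lambda>_. 1) = - mval 1 \<cdot>\<^sub>v vec k (\<lambda>_. 1)"
    proof (rule eq_vecI)
      fix i assume "i < dim_vec (- mval 1 \<cdot>\<^sub>v vec k (\<lambda>_. 1::real))"
      then have i: "i < k" by simp
      have "(Mmat k *\<^sub>v vec k (\<lambda>_. 1)) $ i = (\<Sum>b\<in>{0..<k}. m_entry k (i+1) (b+1) * (\<lambda>_. 1::real) b)"
        using i by (auto simp: Mmat_def scalar_prod_def intro!: sum.cong)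
      also have "\<dots> = 0" unfolding mrow[OF i] by simp
      finally show "(Mmat k *\<^sub>v vec k (\<lambda>_. 1)) $ i = (- mval 1 \<cdot>\<^sub>v vec k (\<lambda>_. 1)) $ i"
        using i m1 by simp
    qed (simp add: Mmat_def)
  qed
qed

end
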